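(* Let $A\in\mathbb{R}^{n\times n}$ and $B\in\mathbb{R}^{n\times m}$ define the discrete-time system $x^+=Ax+Bu$. Let $\mathrm{S}\in\mathbb{R}^{n_s\times n}$ be such that $\mathcal{S}:=\{x\in\mathbb{R}^n:\mathrm{S}x\le \mathbf{1}\}$ is a C-set, and let $\mathrm{U}\in\mathbb{R}^{n_u\times m}$ be such that $\mathcal{U}:=\{u\in\mathbb{R}^m:\mathrm{U}u\le\mathbf{1}\}$ (a polyhedral convex set containing the origin in its interior). Fix $\lambda\in[0,1)$. Let $u_d(0),\dots,u_d(T-1)\in\mathbb{R}^m$ be an input sequence and $x_d(0),\dots,x_d(T)\in\mathbb{R}^n$ the corresponding states with $x_d(k+1)=Ax_d(k)+Bu_d(k)$, and set $U_{0,T}:=[u_d(0)\ \cdots\ u_d(T-1)]$, $X_{0,T}:=[x_d(0)\ \cdots\ x_d(T-1)]$, $X_{1,T}:=[x_d(1)\ \cdots\ x_d(T)]$. Assume the matrix $\Theta:=\begin{bmatrix}U_{0,T}\\ X_{0,T}\end{bmatrix}$ has full row rank. Then there exists a matrix $K\in\mathbb{R}^{m\times n}$ such that $\mathcal{S}$ is $\lambda$-contractive for $x^+=(A+BK)x$ and admissible for $\mathcal{U}$ if and only if there exist matrices $G_K\in\mathbb{R}^{T\times n}$ and $P\in\mathbb{R}^{n_s\times n_s}$ with $P\ge0$ such that $P\mathbf{1}\le\lambda\mathbf{1}$, $\;P\mathrm{S}=\mathrm{S}X_{1,T}G_K$, $\;\mathrm{U}U_{0,T}G_K s\le\mathbf{1}$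 for all vertices $s$ of $\mathcal{S}$, and $I_n=X_{0,T}G_K$. Moreover, any such controller $K$ can be expressed as $K=U_{0,T}G_K$ for some $G_K$ satisfying these conditions (together with some $P\ge 0$).
   Context: $\mathbf{1}$ denotes the vector of all ones of appropriate dimension; inequalities between vectors/matrices are entrywise. A C-set is a convex compact subset of $\mathbb{R}^n$ containing the origin as an interior point. For $\mu\ge0$, $\mu\mathcal{S}:=\{\mu x:x\in\mathcal{S}\}$. A C-set $\mathcal{S}$ is $\lambda$-contractive for $x^+=Fx$ (with $\lambda\in[0,1)$) if for each $x\in\mathcal{S}$, $\inf\{\lambda'\ge0: Fx\in\lambda'\mathcal{S}\}\le\lambda$. $\mathcal{S}$ is admissible for $\mathcal{U}$ (with gain $K$) if $Kx\in\mathcal{U}$ for every $x\in\mathcal{S}$. *)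

theory Defs
  imports "HOL-Analysis.Analysis"
begin

definition C_set :: "('a::real_normed_vector) set \<Rightarrow> bool" where
  "C_set S \<longleftrightarrow> convex S \<and> compact S \<and> 0 \<in> interior S"

definition lam_contractive :: "('a::real_vector) set \<Rightarrow> ('a \<Rightarrow> 'a) \<Rightarrow> real \<Rightarrow> bool" where
  "lam_contractive S F lam \<longleftrightarrow>
     (\<forall>x\<in>S. Inf {l. l \<ge> 0 \<and> F x \<in> (\<lambda>y. l *\<^sub>R y) ` S} \<le> lam)"

definition admissible :: "(real^'n) set \<Rightarrow> (real^'m) set \<Rightarrow> real^'n^'m \<Rightarrow> bool" where
  "admissible S U K \<longleftrightarrow> (\<forall>x\<in>S. K *v x \<in> U)"

definition poly_set :: "real^'n^'k \<Rightarrow> (real^'n) set" where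
  "poly_set M = {x. M *v x \<le> 1}"

definition stack :: "real^'t^'m \<Rightarrow> real^'t^'n \<Rightarrow> real^'t^('m + 'n)" where
  "stack U X = (\<chi> i j. case i of Inl a \<Rightarrow> U $ a $ j | Inr b \<Rightarrow> X $ b $ j)"

end

theory Submission
  imports Defs
begin

lemma mv_row: "((Sm::real^'n^'s) *v x) $ i = inner (Sm $ i) x"
  by (simp add: matrix_vector_mult_def inner_vec_def mult.commute)

lemma transpose_axis: "transpose (Sm::real^'n^'s) *v axis i 1 = Sm $ i"
  by (simp add: vec_eq_iff matrix_vector_mult_def transpose_def axis_def if_distrib cong: if_cong)

lemma farkas:
  fixes Sm :: "real^'n^'s" and c :: "real^'n" and lam :: real
  assumes H: "\<And>x. Sm *v x \<le> 1 \<Longrightarrow> inner c x \<le> lam"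
  shows "\<exists>p::real^'s. 0 \<le> p \<and> sum (\<lambda>i. p $ i) UNIV \<le> lam \<and> transpose Sm *v p = c"
proof -
  define D :: "((real^'n) \<times> real) set" where "D = (\<lambda>i. (Sm $ i, 1)) ` UNIV \<union> {(0,1)}"
  define HH where "HH = convex_cone hull D"
  have finD: "finite D" unfolding D_def by simp
  have polyH: "polyhedron HH" unfolding HH_def using finD by (rule polyhedron_convex_cone_hull)
  have clH: "closed HH" and cvH: "convex HH"
    using polyH polyhedron_imp_closed polyhedron_imp_convex by auto
  have mem: "(c, lam) \<in> HH"
  proof (rule ccontr)
    assume nm: "(c, lam) \<notin> HH"
    obtain a b where ab: "inner a (c, lam) < b" "\<forall>x\<in>HH. inner a x > b"
      using separating_hyperplane_closed_point[OF cvH clH nm] by blast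
    obtain y t where a: "a = (y, t)" by (cases a)
    have b0: "b < 0" using ab(2) convex_cone_hull_contains_0[of D] unfolding HH_def by fastforce
    have pos: "inner a d \<ge> 0" if "d \<in> D" for d
    proof (rule ccontr)
      assume "\<not> inner a d \<ge> 0"
      hence neg: "inner a d < 0" by simp
      define mu where "mu = b / inner a d"
      have "mu \<ge> 0" unfolding mu_def using neg b0 by (simp add: divide_nonpos_neg)
      hence "mu *\<^sub>R d \<in> HH" unfolding HH_def
        by (meson convex_cone_hull_mul hull_subset subsetD that)
      hence "inner a (mu *\<^sub>R d) > b" using ab(2) by blast
      moreover have "inner a (mu *\<^sub>R d) = b" unfolding mu_def using neg by simp
      ultimately show False by simp
    qed
    have t0: "t \<ge> 0" using pos[of "(0,1)"] unfolding D_def a by simp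
    have rows: "inner (Sm $ i) y + t \<ge> 0" for i
      using pos[of "(Sm $ i, 1)"] unfolding D_def a by (simp add: inner_commute)
    have cy: "inner y c + t * lam < 0" using ab(1) b0 unfolding a by simp
    show False
    proof (cases "t > 0")
      case True
      define x where "x = - (1/t) *\<^sub>R y"
      have "Sm *v x \<le> 1"
      proof (unfold less_eq_vec_def, intro allI)
        fix i
        have "(Sm *v x) $ i = - inner (Sm $ i) y / t" unfolding mv_row x_def by simp
        also have "\<dots> \<le> 1" using rows[of i] True by (simp add: le_divide_eq)
        finally show "(Sm *v x) $ i \<le> 1 $ i" by simp
      qed
      hence "inner c x \<le> lam" by (rule H)
      hence "- inner c y / t \<le> lam" unfolding x_def by simp
      hence "- inner c y \<le> lam * t" using True by (metis divide_minus_left pos_divide_le_eq)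
      thus False using cy by (simp add: inner_commute algebra_simps)
    next
      case False
      hence t: "t = 0" using t0 by simp
      hence cy': "inner c y < 0" using cy by (simp add: inner_commute)
      define s where "s = (\<bar>lam\<bar> + 1) / (- inner c y)"
      have s0: "s > 0" unfolding s_def using cy' by (simp add: divide_pos_neg)
      define x where "x = - s *\<^sub>R y"
      have "Sm *v x \<le> 1"
      proof (unfold less_eq_vec_def, intro allI)
        fix i
        have "(Sm *v x) $ i = - s * inner (Sm $ i) y" unfolding mv_row x_def by simp
        also have "\<dots> \<le> 1"
        proof -
          have "0 \<le> s * inner (Sm $ i) y" using rows[of i] t s0 by simp
          thus ?thesis by simp
        qed
        finally show "(Sm *v x) $ i \<le> 1 $ i" by simp
      qed
      hence "inner c x \<le> lam" by (rule H)
      moreover have "inner c x = \<bar>lam\<bar> + 1" unfolding x_def s_def using cy' by simp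
      ultimately show False by simp
    qed
  qed
  define K :: "((real^'n) \<times> real) set" where
    "K = {(transpose Sm *v p, sum (\<lambda>i. p $ i) UNIV + q) | p q. 0 \<le> p \<and> 0 \<le> q}"
  have cK: "convex_cone K"
    unfolding convex_cone_iff
  proof (intro conjI ballI allI impI)
    show "0 \<in> K" unfolding K_def by (rule CollectI, rule exI[of _ 0], rule exI[of _ 0]) (simp add: zero_prod_def)
  next
    fix x z assume "x \<in> K" "z \<in> K"
    then obtain p q p' q' where "x = (transpose Sm *v p, sum (\<lambda>i. p $ i) UNIV + q)" "0 \<le> p" "0 \<le> q"
      "z = (transpose Sm *v p', sum (\<lambda>i. p' $ i) UNIV + q')" "0 \<le> p'" "0 \<le> q'"
      unfolding K_def by blast
    thus "x + z \<in> K" unfolding K_def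
      by (intro CollectI exI[of _ "p + p'"] exI[of _ "q + q'"])
        (simp add: matrix_vector_right_distrib sum.distrib)
  next
    fix x and r :: real assume "x \<in> K" "0 \<le> r"
    then obtain p q where "x = (transpose Sm *v p, sum (\<lambda>i. p $ i) UNIV + q)" "0 \<le> p" "0 \<le> q"
      unfolding K_def by blast
    thus "r *\<^sub>R x \<in> K" using \<open>0 \<le> r\<close> unfolding K_def
      by (intro CollectI exI[of _ "r *\<^sub>R p"] exI[of _ "r * q"])
        (simp add: matrix_vector_mult_scaleR sum_distrib_left distrib_left less_eq_vec_def)
  qed
  have DK: "D \<subseteq> K"
  proof
    fix d assume "d \<in> D"
    then consider i where "d = (Sm $ i, 1)" | "d = (0, 1)" unfolding D_def by blast
    thus "d \<in> K"
    proof cases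
      case (1 i)
      have e1: "transpose Sm *v axis i (1::real) = Sm $ i" by (rule transpose_axis)
      have e2: "sum (\<lambda>j. axis i (1::real) $ j) UNIV = 1" by (simp add: axis_def)
      have e3: "0 \<le> axis i (1::real)" by (simp add: less_eq_vec_def axis_def)
      show ?thesis unfolding K_def 1
        by (intro CollectI exI[of _ "axis i 1"] exI[of _ 0]) (simp only: e1 e2 e3, simp)
    next
      case 2
      show ?thesis unfolding K_def 2
        by (intro CollectI exI[of _ 0] exI[of _ 1]) simp
    qed
  qed
  have "HH \<subseteq> K" unfolding HH_def using DK cK by (rule hull_minimal)
  with mem have "(c, lam) \<in> K" by blast
  then obtain p q where "c = transpose Sm *v p" "lam = sum (\<lambda>i. p $ i) UNIV + q" "0 \<le> p" "0 \<le> q"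
    unfolding K_def by blast
  thus ?thesis by (intro exI[of _ p]) auto
qed


lemma poly_zero:
  fixes Sm :: "real^'n^'s"
  assumes C: "C_set (poly_set Sm)" and y: "Sm *v y \<le> 0"
  shows "y = 0"
proof (rule ccontr)
  assume ne: "y \<noteq> 0"
  have "bounded (poly_set Sm)" using C unfolding C_set_def by (simp add: compact_imp_bounded)
  then obtain Bd where Bd: "\<And>x. x \<in> poly_set Sm \<Longrightarrow> norm x \<le> Bd" unfolding bounded_iff by blast
  have ny: "norm y > 0" using ne by simp
  define t where "t = (\<bar>Bd\<bar> + 1) / norm y"
  have t0: "t \<ge> 0" unfolding t_def using ny by simp
  have "t *\<^sub>R y \<in> poly_set Sm"
    unfolding poly_set_def
  proof (simp add: less_eq_vec_def matrix_vector_mult_scaleR, intro allI)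
    fix i
    have "(Sm *v y) $ i \<le> 0" using y by (simp add: less_eq_vec_def)
    hence "t * (Sm *v y) $ i \<le> 0" using t0 by (simp add: mult_nonneg_nonpos)
    thus "t * (Sm *v y) $ i \<le> 1" by simp
  qed
  hence "norm (t *\<^sub>R y) \<le> Bd" by (rule Bd)
  moreover have "norm (t *\<^sub>R y) = \<bar>Bd\<bar> + 1" unfolding t_def using ny by simp
  ultimately show False by simp
qed

lemma scale_mem:
  fixes Sm :: "real^'n^'s"
  assumes "0 < l" "Sm *v y \<le> l *\<^sub>R 1"
  shows "y \<in> (\<lambda>z. l *\<^sub>R z) ` poly_set Sm"
proof (rule image_eqI[of _ _ "(1/l) *\<^sub>R y"])
  show "y = l *\<^sub>R ((1/l) *\<^sub>R y)" using assms by simp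
  show "(1/l) *\<^sub>R y \<in> poly_set Sm" unfolding poly_set_def
  proof (simp add: less_eq_vec_def matrix_vector_mult_scaleR, intro allI)
    fix i
    have "(Sm *v y) $ i \<le> l" using assms(2) by (simp add: less_eq_vec_def)
    thus "(Sm *v y) $ i / l \<le> 1" using assms(1) by (simp add: divide_le_eq)
  qed
qed

lemma mem_scale:
  fixes Sm :: "real^'n^'s"
  assumes "0 \<le> l" "y \<in> (\<lambda>z. l *\<^sub>R z) ` poly_set Sm"
  shows "Sm *v y \<le> l *\<^sub>R 1"
proof -
  obtain z where z: "y = l *\<^sub>R z" "Sm *v z \<le> 1" using assms(2) unfolding poly_set_def by blast
  show ?thesis unfolding z(1) less_eq_vec_def
  proof (simp add: matrix_vector_mult_scaleR, intro allI)
    fix i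
    have "(Sm *v z) $ i \<le> 1" using z(2) by (simp add: less_eq_vec_def)
    thus "l * (Sm *v z) $ i \<le> l" using assms(1) by (simp add: mult_left_le)
  qed
qed

lemma contr_iff:
  fixes Sm :: "real^'n^'s"
  assumes C: "C_set (poly_set Sm)" and lam: "0 \<le> lam"
  shows "lam_contractive (poly_set Sm) F lam \<longleftrightarrow>
         (\<forall>x. Sm *v x \<le> 1 \<longrightarrow> Sm *v F x \<le> lam *\<^sub>R 1)"
proof -
  define L where "L x = {l. l \<ge> 0 \<and> F x \<in> (\<lambda>y. l *\<^sub>R y) ` poly_set Sm}" for x
  have bdd: "bdd_below (L x)" for x unfolding L_def by (rule bdd_belowI[of _ 0]) auto
  have nemp: "L x \<noteq> {}" for x
  proof -
    define l0 where "l0 = 1 + norm (Sm *v F x)"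
    have l0: "l0 > 0" unfolding l0_def by (simp add: add_pos_nonneg)
    have "Sm *v F x \<le> l0 *\<^sub>R 1" unfolding less_eq_vec_def l0_def
      using component_le_norm_cart[of "Sm *v F x"] by (simp add: abs_le_iff) (smt (verit))
    hence "l0 \<in> L x" unfolding L_def using l0 scale_mem by auto
    thus ?thesis by blast
  qed
  show ?thesis
  proof
    assume H: "lam_contractive (poly_set Sm) F lam"
    show "\<forall>x. Sm *v x \<le> 1 \<longrightarrow> Sm *v F x \<le> lam *\<^sub>R 1"
    proof (intro allI impI)
      fix x assume "Sm *v x \<le> 1"
      hence "x \<in> poly_set Sm" unfolding poly_set_def by simp
      hence inf: "Inf (L x) \<le> lam" using H unfolding lam_contractive_def L_def by blast
      show "Sm *v F x \<le> lam *\<^sub>R 1" unfolding less_eq_vec_def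
      proof (intro allI)
        fix i
        have "(Sm *v F x) $ i \<le> lam + e" if e: "e > 0" for e
        proof -
          have "Inf (L x) < lam + e" using inf e by simp
          then obtain l where l: "l \<in> L x" "l < lam + e"
            using cInf_less_iff[OF nemp bdd] by blast
          have "Sm *v F x \<le> l *\<^sub>R 1" using l(1) mem_scale unfolding L_def by blast
          hence "(Sm *v F x) $ i \<le> l" by (simp add: less_eq_vec_def)
          thus ?thesis using l(2) by simp
        qed
        hence "(Sm *v F x) $ i \<le> lam" by (rule field_le_epsilon)
        thus "(Sm *v F x) $ i \<le> (lam *\<^sub>R 1) $ i" by simp
      qed
    qed
  next
    assume H: "\<forall>x. Sm *v x \<le> 1 \<longrightarrow> Sm *v F x \<le> lam *\<^sub>R 1"
    show "lam_contractive (poly_set Sm) F lam"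
      unfolding lam_contractive_def
    proof
      fix x assume x: "x \<in> poly_set Sm"
      have le: "Sm *v F x \<le> lam *\<^sub>R 1" using H x unfolding poly_set_def by blast
      have "lam \<in> L x"
      proof (cases "lam > 0")
        case True
        thus ?thesis unfolding L_def using scale_mem[OF True le] by simp
      next
        case False
        hence l0: "lam = 0" using lam by simp
        hence "Sm *v F x \<le> 0" using le by simp
        hence "F x = 0" using poly_zero[OF C] by blast
        hence "F x = 0 *\<^sub>R x" by simp
        thus ?thesis unfolding L_def using x l0 by blast
      qed
      hence "Inf (L x) \<le> lam" using cInf_lower[OF _ bdd] by blast
      thus "Inf {l. 0 \<le> l \<and> F x \<in> (\<lambda>y. l *\<^sub>R y) ` poly_set Sm} \<le> lam" unfolding L_def .
    qed
  qed
qed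


lemma mv_mono:
  fixes P :: "real^'s^'r"
  assumes P: "0 \<le> P" and yz: "y \<le> z"
  shows "P *v y \<le> P *v z"
  unfolding less_eq_vec_def
proof
  fix r
  show "(P *v y) $ r \<le> (P *v z) $ r"
    unfolding matrix_vector_mult_def vec_lambda_beta
  proof (rule sum_mono)
    fix i
    have "0 \<le> P $ r $ i" using P by (simp add: less_eq_vec_def)
    moreover have "y $ i \<le> z $ i" using yz by (simp add: less_eq_vec_def)
    ultimately show "P $ r $ i * y $ i \<le> P $ r $ i * z $ i"
      by (simp add: mult_left_mono)
  qed
qed

lemma farkas_mat:
  fixes Sm :: "real^'n^'s" and M :: "real^'n^'n"
  shows "(\<forall>x. Sm *v x \<le> 1 \<longrightarrow> Sm *v (M *v x) \<le> lam *\<^sub>R 1) \<longleftrightarrow>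
         (\<exists>P::real^'s^'s. 0 \<le> P \<and> P *v 1 \<le> lam *\<^sub>R 1 \<and> P ** Sm = Sm ** M)"
proof
  assume H: "\<forall>x. Sm *v x \<le> 1 \<longrightarrow> Sm *v (M *v x) \<le> lam *\<^sub>R 1"
  have "\<exists>p::real^'s. 0 \<le> p \<and> sum (\<lambda>i. p $ i) UNIV \<le> lam \<and> transpose Sm *v p = (Sm ** M) $ r" for r
  proof (rule farkas)
    fix x assume "Sm *v x \<le> 1"
    hence "Sm *v (M *v x) \<le> lam *\<^sub>R 1" using H by blast
    hence "(Sm *v (M *v x)) $ r \<le> lam" by (simp add: less_eq_vec_def)
    thus "inner ((Sm ** M) $ r) x \<le> lam"
      by (simp add: matrix_vector_mul_assoc mv_row[symmetric])
  qed
  then obtain pp where pp: "\<And>r. 0 \<le> pp r \<and> sum (\<lambda>i. pp r $ i) UNIV \<le> lam \<and> transpose Sm *v pp r = (Sm ** M) $ r"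
    by metis
  define P :: "real^'s^'s" where "P = (\<chi> r. pp r)"
  have "0 \<le> P" using pp unfolding P_def by (simp add: less_eq_vec_def)
  moreover have "P *v 1 \<le> lam *\<^sub>R 1" using pp unfolding P_def
    by (simp add: less_eq_vec_def matrix_vector_mult_def)
  moreover have "P ** Sm = Sm ** M"
  proof -
    have "(P ** Sm) $ r $ j = (Sm ** M) $ r $ j" for r j
    proof -
      have "(Sm ** M) $ r $ j = (transpose Sm *v pp r) $ j" using pp[of r] by simp
      also have "\<dots> = (P ** Sm) $ r $ j"
        by (simp add: P_def matrix_matrix_mult_def matrix_vector_mult_def transpose_def mult.commute)
      finally show ?thesis by simp
    qed
    thus ?thesis by (simp add: vec_eq_iff)
  qed
  ultimately show "\<exists>P::real^'s^'s. 0 \<le> P \<and> P *v 1 \<le> lam *\<^sub>R 1 \<and> P ** Sm = Sm ** M" by blast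
next
  assume "\<exists>P::real^'s^'s. 0 \<le> P \<and> P *v 1 \<le> lam *\<^sub>R 1 \<and> P ** Sm = Sm ** M"
  then obtain P :: "real^'s^'s" where P: "0 \<le> P" "P *v 1 \<le> lam *\<^sub>R 1" "P ** Sm = Sm ** M" by blast
  show "\<forall>x. Sm *v x \<le> 1 \<longrightarrow> Sm *v (M *v x) \<le> lam *\<^sub>R 1"
  proof (intro allI impI)
    fix x assume x: "Sm *v x \<le> 1"
    have "Sm *v (M *v x) = P *v (Sm *v x)" using P(3) by (simp add: matrix_vector_mul_assoc)
    also have "\<dots> \<le> P *v 1" using P(1) x by (rule mv_mono)
    also have "\<dots> \<le> lam *\<^sub>R 1" by (rule P(2))
    finally show "Sm *v (M *v x) \<le> lam *\<^sub>R 1" .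
  qed
qed

lemma adm_iff:
  fixes Sm :: "real^'n^'s" and Um :: "real^'m^'u" and K :: "real^'n^'m"
  assumes C: "C_set (poly_set Sm)"
  shows "admissible (poly_set Sm) (poly_set Um) K \<longleftrightarrow>
         (\<forall>s. s extreme_point_of (poly_set Sm) \<longrightarrow> (Um ** K) *v s \<le> 1)"
proof -
  have eq: "admissible (poly_set Sm) (poly_set Um) K \<longleftrightarrow> poly_set Sm \<subseteq> poly_set (Um ** K)"
    unfolding admissible_def poly_set_def by (auto simp: matrix_vector_mul_assoc)
  have cv: "convex (poly_set (Um ** K))"
    unfolding convex_def poly_set_def
  proof (clarify)
    fix x y :: "real^'n" and u v :: real
    assume a: "(Um ** K) *v x \<le> 1" "(Um ** K) *v y \<le> 1" "0 \<le> u" "0 \<le> v" "u + v = 1"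
    show "(Um ** K) *v (u *\<^sub>R x + v *\<^sub>R y) \<le> 1"
      unfolding less_eq_vec_def
    proof (simp add: matrix_vector_right_distrib matrix_vector_mult_scaleR, intro allI)
      fix i
      have "((Um ** K) *v x) $ i \<le> 1" "((Um ** K) *v y) $ i \<le> 1" using a(1,2) by (auto simp: less_eq_vec_def)
      hence "u * ((Um ** K) *v x) $ i \<le> u" "v * ((Um ** K) *v y) $ i \<le> v"
        using a(3,4) by (auto simp: mult_left_le)
      thus "u * ((Um ** K) *v x) $ i + v * ((Um ** K) *v y) $ i \<le> 1" using a(5) by simp
    qed
  qed
  have KM: "poly_set Sm = convex hull {x. x extreme_point_of poly_set Sm}"
    using C unfolding C_set_def by (intro Krein_Milman_Minkowski) auto
  show ?thesis
  proof
    assume "admissible (poly_set Sm) (poly_set Um) K"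
    hence sub: "poly_set Sm \<subseteq> poly_set (Um ** K)" using eq by simp
    show "\<forall>s. s extreme_point_of (poly_set Sm) \<longrightarrow> (Um ** K) *v s \<le> 1"
      using sub by (auto simp: extreme_point_of_def poly_set_def)
  next
    assume H: "\<forall>s. s extreme_point_of (poly_set Sm) \<longrightarrow> (Um ** K) *v s \<le> 1"
    have "{x. x extreme_point_of poly_set Sm} \<subseteq> poly_set (Um ** K)"
      using H unfolding poly_set_def by blast
    hence "convex hull {x. x extreme_point_of poly_set Sm} \<subseteq> poly_set (Um ** K)"
      using cv by (rule hull_minimal)
    thus "admissible (poly_set Sm) (poly_set Um) K" using eq KM by simp
  qed
qed


lemma card_sum_type: "CARD('m::finite + 'n::finite) = CARD('m) + CARD('n)"
  by (rule card_sum)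

lemma stack_Inl: "(stack U0 X0 *v v) $ Inl a = (U0 *v v) $ a"
  by (simp add: stack_def matrix_vector_mult_def)
lemma stack_Inr: "(stack U0 X0 *v v) $ Inr a = (X0 *v v) $ a"
  by (simp add: stack_def matrix_vector_mult_def)
lemma mm_col: "(U0 ** (\<chi> t j. g j $ t)) $ a $ j = (U0 *v g j) $ a"
  by (simp add: matrix_matrix_mult_def matrix_vector_mult_def)

lemma exG:
  fixes U0 :: "real^'t^'m" and X0 :: "real^'t^'n" and K :: "real^'n^'m"
  assumes rank: "rank (stack U0 X0) = CARD('m) + CARD('n)"
  shows "\<exists>G::real^'n^'t. U0 ** G = K \<and> X0 ** G = mat 1"
proof -
  have "surj ((*v) (stack U0 X0))"
    using rank full_rank_surjective[of "stack U0 X0"] card_sum_type[where 'm='m and 'n='n] by simp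
  define vv :: "'n \<Rightarrow> real^('m + 'n)" where
    "vv j = (\<chi> i. case i of Inl a \<Rightarrow> K $ a $ j | Inr b \<Rightarrow> (mat 1 :: real^'n^'n) $ b $ j)" for j
  have "\<forall>j. \<exists>x. stack U0 X0 *v x = vv j" using \<open>surj _\<close> by (metis surjD)
  hence "\<exists>g. \<forall>j. stack U0 X0 *v g j = vv j" by (rule choice)
  then obtain g where g0: "\<And>j. stack U0 X0 *v g j = vv j" by blast
  have g: "stack U0 X0 *v g j =
      (\<chi> i. case i of Inl a \<Rightarrow> K $ a $ j | Inr b \<Rightarrow> (mat 1 :: real^'n^'n) $ b $ j)" for j
    using g0[of j] unfolding vv_def .
  define G :: "real^'n^'t" where "G = (\<chi> t j. g j $ t)"
  have 1: "(U0 ** G) $ a $ j = K $ a $ j" for a j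
  proof -
    have "(U0 ** G) $ a $ j = (U0 *v g j) $ a" unfolding G_def by (rule mm_col)
    also have "\<dots> = (stack U0 X0 *v g j) $ Inl a" by (rule stack_Inl[symmetric])
    also have "\<dots> = K $ a $ j" unfolding g by simp
    finally show ?thesis .
  qed
  have 2: "(X0 ** G) $ b $ j = (mat 1 :: real^'n^'n) $ b $ j" for b j
  proof -
    have "(X0 ** G) $ b $ j = (X0 *v g j) $ b" unfolding G_def by (rule mm_col)
    also have "\<dots> = (stack U0 X0 *v g j) $ Inr b" by (rule stack_Inr[symmetric])
    also have "\<dots> = (mat 1 :: real^'n^'n) $ b $ j" unfolding g by simp
    finally show ?thesis .
  qed
  show ?thesis using 1 2 by (intro exI[of _ G]) (simp add: vec_eq_iff)
qed

lemma data:
  fixes A :: "real^'n^'n" and B :: "real^'m^'n"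
    and ud :: "nat \<Rightarrow> real^'m" and xd :: "nat \<Rightarrow> real^'n"
    and tix :: "'t::finite \<Rightarrow> nat"
    and U0 :: "real^'t^'m" and X0 :: "real^'t^'n" and X1 :: "real^'t^'n"
  assumes dyn: "\<And>k. k < CARD('t) \<Longrightarrow> xd (Suc k) = A *v xd k + B *v ud k"
    and tix: "bij_betw tix UNIV {..<CARD('t)}"
    and U0_def: "U0 = (\<chi> i j. ud (tix j) $ i)"
    and X0_def: "X0 = (\<chi> i j. xd (tix j) $ i)"
    and X1_def: "X1 = (\<chi> i j. xd (Suc (tix j)) $ i)"
  shows "X1 = A ** X0 + B ** U0"
proof -
  have "X1 $ i $ j = (A ** X0 + B ** U0) $ i $ j" for i j
  proof -
    have "tix j < CARD('t)" using tix by (meson bij_betw_apply UNIV_I lessThan_iff)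
    hence "xd (Suc (tix j)) = A *v xd (tix j) + B *v ud (tix j)" by (rule dyn)
    thus ?thesis unfolding X1_def X0_def U0_def
      by (simp add: matrix_matrix_mult_def matrix_vector_mult_def)
  qed
  thus ?thesis by (simp add: vec_eq_iff)
qed

lemma mat_rdistrib: "((A::real^'b^'a) + B) ** (C::real^'c^'b) = A ** C + B ** C"
  by (simp add: matrix_matrix_mult_def vec_eq_iff sum.distrib distrib_right)

theorem theorem2:
  fixes A :: "real^'n^'n" and B :: "real^'m^'n"
    and Sm :: "real^'n^'s" and Um :: "real^'m^'u"
    and lam :: real
    and ud :: "nat \<Rightarrow> real^'m" and xd :: "nat \<Rightarrow> real^'n"
    and tix :: "'t::finite \<Rightarrow> nat"
    and U0 :: "real^'t^'m" and X0 :: "real^'t^'n" and X1 :: "real^'t^'n"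
  assumes Cset: "C_set (poly_set Sm)"
    and Uint: "0 \<in> interior (poly_set Um)"
    and lam: "0 \<le> lam" "lam < 1"
    and dyn: "\<And>k. k < CARD('t) \<Longrightarrow> xd (Suc k) = A *v xd k + B *v ud k"
    and tix: "bij_betw tix UNIV {..<CARD('t)}"
    and U0_def: "U0 = (\<chi> i j. ud (tix j) $ i)"
    and X0_def: "X0 = (\<chi> i j. xd (tix j) $ i)"
    and X1_def: "X1 = (\<chi> i j. xd (Suc (tix j)) $ i)"
    and rank: "rank (stack U0 X0) = CARD('m) + CARD('n)"
  shows "((\<exists>K :: real^'n^'m.
            lam_contractive (poly_set Sm) (\<lambda>x. (A + B ** K) *v x) lam \<and>
            admissible (poly_set Sm) (poly_set Um) K)
          \<longleftrightarrow>
          (\<exists>(G :: real^'n^'t) (P :: real^'s^'s).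
            0 \<le> P \<and> P *v 1 \<le> lam *\<^sub>R 1 \<and> P ** Sm = Sm ** X1 ** G \<and>
            (\<forall>s. s extreme_point_of (poly_set Sm) \<longrightarrow> (Um ** U0 ** G) *v s \<le> 1) \<and>
            mat 1 = X0 ** G))
       \<and> (\<forall>K :: real^'n^'m.
            lam_contractive (poly_set Sm) (\<lambda>x. (A + B ** K) *v x) lam \<and>
            admissible (poly_set Sm) (poly_set Um) K \<longrightarrow>
            (\<exists>(G :: real^'n^'t) (P :: real^'s^'s).
              0 \<le> P \<and> P *v 1 \<le> lam *\<^sub>R 1 \<and> P ** Sm = Sm ** X1 ** G \<and>
              (\<forall>s. s extreme_point_of (poly_set Sm) \<longrightarrow> (Um ** U0 ** G) *v s \<le> 1) \<and>
              mat 1 = X0 ** G \<and> K = U0 ** G))"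
  proof -
  let ?S = "poly_set Sm"
  let ?Q = "\<lambda>K::real^'n^'m. lam_contractive ?S (\<lambda>x. (A + B ** K) *v x) lam \<and>
            admissible ?S (poly_set Um) K"
  let ?C = "\<lambda>(G :: real^'n^'t) (P :: real^'s^'s).
            0 \<le> P \<and> P *v 1 \<le> lam *\<^sub>R 1 \<and> P ** Sm = Sm ** X1 ** G \<and>
            (\<forall>s. s extreme_point_of ?S \<longrightarrow> (Um ** U0 ** G) *v s \<le> 1) \<and>
            mat 1 = X0 ** G"
  have CI: "lam_contractive ?S (\<lambda>x. M *v x) lam \<longleftrightarrow>
       (\<exists>P::real^'s^'s. 0 \<le> P \<and> P *v 1 \<le> lam *\<^sub>R 1 \<and> P ** Sm = Sm ** M)" for M :: "real^'n^'n"
    using contr_iff[OF Cset lam(1), of "\<lambda>x. M *v x"] farkas_mat[of Sm M lam] by simp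
  have D: "X1 = A ** X0 + B ** U0" using data[OF dyn tix U0_def X0_def X1_def] by blast
  have XG: "Sm ** X1 ** G = Sm ** (A + B ** (U0 ** G))" if "mat 1 = X0 ** G" for G :: "real^'n^'t"
  proof -
    have "X1 ** G = A ** X0 ** G + B ** U0 ** G" unfolding D by (rule mat_rdistrib)
    also have "\<dots> = A ** (X0 ** G) + B ** (U0 ** G)" by (simp add: matrix_mul_assoc)
    also have "\<dots> = A + B ** (U0 ** G)" using that[symmetric] by simp
    finally have e: "X1 ** G = A + B ** (U0 ** G)" .
    have "Sm ** X1 ** G = Sm ** (X1 ** G)" by (simp add: matrix_mul_assoc)
    thus ?thesis using e by simp
  qed
  have UG: "Um ** U0 ** G = Um ** (U0 ** G)" for G :: "real^'n^'t" by (simp add: matrix_mul_assoc)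
  have fwd: "\<exists>(G :: real^'n^'t) (P :: real^'s^'s).
              0 \<le> P \<and> P *v 1 \<le> lam *\<^sub>R 1 \<and> P ** Sm = Sm ** X1 ** G \<and>
              (\<forall>s. s extreme_point_of ?S \<longrightarrow> (Um ** U0 ** G) *v s \<le> 1) \<and>
              mat 1 = X0 ** G \<and> K = U0 ** G" if Q: "?Q K" for K
  proof -
    obtain G :: "real^'n^'t" where G: "U0 ** G = K" "X0 ** G = mat 1" using exG[OF rank] by blast
    have lc: "lam_contractive ?S (\<lambda>x. (A + B ** K) *v x) lam" using Q by blast
    obtain P :: "real^'s^'s" where P: "0 \<le> P" "P *v 1 \<le> lam *\<^sub>R 1" "P ** Sm = Sm ** (A + B ** K)"
      using lc unfolding CI[of "A + B ** K"] by blast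
    have ad: "admissible ?S (poly_set Um) K" using Q by blast
    have V: "\<forall>s. s extreme_point_of ?S \<longrightarrow> (Um ** K) *v s \<le> 1"
      using ad unfolding adm_iff[OF Cset, of Um K] .
    have "Sm ** X1 ** G = Sm ** (A + B ** (U0 ** G))" using XG[of G] G(2) by simp
    hence c3: "P ** Sm = Sm ** X1 ** G" using P(3) G(1) by simp
    have c4: "\<forall>s. s extreme_point_of ?S \<longrightarrow> (Um ** U0 ** G) *v s \<le> 1"
      unfolding UG[of G] G(1) by (rule V)
    show ?thesis
      by (rule exI[of _ G], rule exI[of _ P]) (intro conjI P(1) P(2) c3 c4 G(2)[symmetric] G(1)[symmetric])
  qed
  have bwd: "?Q (U0 ** G)" if C: "?C G P" for G P
  proof -
    have X: "mat 1 = X0 ** G" using C by blast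
    have "P ** Sm = Sm ** X1 ** G" using C by blast
    hence "P ** Sm = Sm ** (A + B ** (U0 ** G))" using XG[OF X] by simp
    moreover have "0 \<le> P" "P *v 1 \<le> lam *\<^sub>R 1" using C by blast+
    ultimately have c: "lam_contractive ?S (\<lambda>x. (A + B ** (U0 ** G)) *v x) lam"
      unfolding CI[of "A + B ** (U0 ** G)"] by blast
    have "\<forall>s. s extreme_point_of ?S \<longrightarrow> (Um ** U0 ** G) *v s \<le> 1" using C by blast
    hence "\<forall>s. s extreme_point_of ?S \<longrightarrow> (Um ** (U0 ** G)) *v s \<le> 1" unfolding UG[of G] .
    hence "admissible ?S (poly_set Um) (U0 ** G)" unfolding adm_iff[OF Cset, of Um "U0 ** G"] .
    with c show ?thesis by blast
  qed
  show ?thesis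
  proof (intro conjI allI impI iffI)
    assume "\<exists>K. ?Q K"
    then obtain K where "?Q K" by blast
    from fwd[OF this] show "\<exists>G P. ?C G P" by blast
  next
    assume "\<exists>G P. ?C G P"
    then obtain G P where "?C G P" by blast
    from bwd[OF this] show "\<exists>K. ?Q K" by blast
  next
    fix K assume "?Q K"
    from fwd[OF this] show "\<exists>(G :: real^'n^'t) (P :: real^'s^'s).
              0 \<le> P \<and> P *v 1 \<le> lam *\<^sub>R 1 \<and> P ** Sm = Sm ** X1 ** G \<and>
              (\<forall>s. s extreme_point_of ?S \<longrightarrow> (Um ** U0 ** G) *v s \<le> 1) \<and>
              mat 1 = X0 ** G \<and> K = U0 ** G" .
  qed
qed

end
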